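(* Let $\mathbb{F}$ be a finite field, let $\ell,h,n,d$ be positive integers, and let $P\subseteq\mathbb{F}[w_1,\dots,w_\ell]$ be a maximal ideal such that $\mathbb{E}=\mathbb{F}[w_1,\dots,w_\ell]/P$ is a finite field extension of $\mathbb{F}$ of degree $k$, and such that every coset $g+P\in\mathbb{E}$ contains an element of $\mathbb{F}[w_1,\dots,w_\ell]$ of total degree at most $h$. Let $\{g_1+P,\dots,g_k+P\}$ be a basis of $\mathbb{E}$ over $\mathbb{F}$, for each $i$ let $g_i'\in g_i+P$ have total degree at most $h$, and let $\varphi:\mathbb{E}\to\mathbb{F}^{\le h}[w_1,\dots,w_\ell]$ be the $\mathbb{F}$-linear map with $\varphi(g_i+P)=g_i'$ for all $i$ (applied coordinate-wise to vectors). Let $\widehat H:S\to\mathbb{E}^n$ be a hitting set generator with density $1-\delta$ for $n$-variate polynomials of degree at most $d$ over $\mathbb{E}$. Then $H=\varphi\circ\widehat H:S\to(\mathbb{F}^{\le h}[w_1,\dots,w_\ell])^n$ is a polynomial hitting set generator with density $1-\delta$ for $n$-variate polynomials of degree at most $d$ over $\mathbb{F}$ with $\ell$-variate polynomial evaluation points of degree at most $h$.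
   Context: $\mathbb{F}^{\le h}[w_1,\dots,w_\ell]$ denotes the polynomials in $w_1,\dots,w_\ell$ over $\mathbb{F}$ of total degree at most $h$. A hitting set generator (HSG) with density $1-\delta$ for $n$-variate polynomials of degree at most $d$ over a field $\mathbb{E}$ is a map $H:T\to\mathbb{E}^n$ from a finite nonempty set $T$ such that for every nonzero $f\in\mathbb{E}[x_1,\dots,x_n]$ of total degree at most $d$, $\Pr_{t\in T}[f(H(t))\neq 0]\ge 1-\delta$ ($t$ uniform). A polynomial hitting set generator (PHSG) with density $1-\delta$ for $n$-variate polynomials of degree at most $d$ over $\mathbb{F}$ with $\ell$-variate polynomial evaluation points of degree at most $h$ is a map $H:T\to(\mathbb{F}^{\le h}[w_1,\dots,w_\ell])^n$ from a finite nonempty set $T$ such that for every nonzero $f\in\mathbb{F}[x_1,\dots,x_n]$ of total degree at most $d$, $\Pr_{y\in T}[f(H(y))=0]\le\delta$, where $f(H(y))\in\mathbb{F}[w_1,\dots,w_\ell]$ is the composed polynomial and $y$ is uniform in $T$. Its seed length is $\log|T|$. *)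

theory Defs
  imports Complex_Main "HOL-Library.Poly_Mapping"
begin

text \<open>Multivariate polynomials: finitely supported maps from monomials (exponent
vectors, variable i having index i) to coefficients.  Variable w_{i+1} / x_{i+1}
is represented by index i.\<close>

type_synonym 'a mpoly = "(nat \<Rightarrow>\<^sub>0 nat) \<Rightarrow>\<^sub>0 'a"

definition mon_deg :: "(nat \<Rightarrow>\<^sub>0 nat) \<Rightarrow> nat" where
  "mon_deg m = (\<Sum>i\<in>Poly_Mapping.keys m. Poly_Mapping.lookup m i)"

text \<open>Total degree (the zero polynomial gets degree 0).\<close>
definition tdeg :: "'a::zero mpoly \<Rightarrow> nat" where
  "tdeg p = Max (insert 0 (mon_deg ` Poly_Mapping.keys p))"

definition polys :: "nat \<Rightarrow> 'a::zero mpoly set" where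
  "polys m = {p. \<forall>mo\<in>Poly_Mapping.keys p. Poly_Mapping.keys mo \<subseteq> {..<m}}"

definition polys_le :: "nat \<Rightarrow> nat \<Rightarrow> 'a::zero mpoly set" where
  "polys_le m h = {p \<in> polys m. tdeg p \<le> h}"

definition Const :: "'a::zero \<Rightarrow> 'a mpoly" where
  "Const c = Poly_Mapping.single 0 c"

definition eval_mpoly :: "('a::zero \<Rightarrow> 'b::comm_ring_1) \<Rightarrow> (nat \<Rightarrow> 'b) \<Rightarrow> 'a mpoly \<Rightarrow> 'b" where
  "eval_mpoly c x p = (\<Sum>mo\<in>Poly_Mapping.keys p. c (Poly_Mapping.lookup p mo) * (\<Prod>i\<in>Poly_Mapping.keys mo. x i ^ Poly_Mapping.lookup mo i))"

definition hsg :: "nat \<Rightarrow> nat \<Rightarrow> 's set \<Rightarrow> ('s \<Rightarrow> nat \<Rightarrow> 'e::field) \<Rightarrow> real \<Rightarrow> bool" where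
  "hsg n d T H \<delta> \<longleftrightarrow> finite T \<and> T \<noteq> {} \<and>
     (\<forall>f :: 'e mpoly. f \<noteq> 0 \<and> f \<in> polys n \<and> tdeg f \<le> d \<longrightarrow>
        real (card {t\<in>T. eval_mpoly id (H t) f \<noteq> 0}) / real (card T) \<ge> 1 - \<delta>)"

text \<open>Polynomial hitting set generator with density 1 - delta for n-variate
polynomials of degree at most d over 'a with l-variate polynomial evaluation points
of degree at most h.  f(H(y)) is the composed polynomial in 'a mpoly.\<close>
definition phsg :: "nat \<Rightarrow> nat \<Rightarrow> nat \<Rightarrow> nat \<Rightarrow> 's set \<Rightarrow> ('s \<Rightarrow> nat \<Rightarrow> 'a::field mpoly) \<Rightarrow> real \<Rightarrow> bool" where
  "phsg l h n d T H \<delta> \<longleftrightarrow> finite T \<and> T \<noteq> {} \<and>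
     (\<forall>y\<in>T. \<forall>i<n. H y i \<in> polys_le l h) \<and>
     (\<forall>f :: 'a mpoly. f \<noteq> 0 \<and> f \<in> polys n \<and> tdeg f \<le> d \<longrightarrow>
        real (card {y\<in>T. eval_mpoly Const (H y) f = 0}) / real (card T) \<le> \<delta>)"

definition is_ideal :: "nat \<Rightarrow> 'a::comm_ring_1 mpoly set \<Rightarrow> bool" where
  "is_ideal l I \<longleftrightarrow> I \<subseteq> polys l \<and> 0 \<in> I \<and>
     (\<forall>p\<in>I. \<forall>q\<in>I. p + q \<in> I) \<and> (\<forall>p\<in>I. \<forall>q\<in>polys l. q * p \<in> I)"

definition is_maximal_ideal :: "nat \<Rightarrow> 'a::comm_ring_1 mpoly set \<Rightarrow> bool" where
  "is_maximal_ideal l I \<longleftrightarrow> is_ideal l I \<and> I \<noteq> polys l \<and>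
     (\<forall>J. is_ideal l J \<and> I \<subseteq> J \<longrightarrow> J = I \<or> J = polys l)"

text \<open>The field 'e together with pi is the quotient F[w_1..w_l]/P: pi is a surjective
ring homomorphism from polys l onto 'e whose kernel is P (pi g is the coset g + P).\<close>
definition is_quotient_map :: "nat \<Rightarrow> 'a::comm_ring_1 mpoly set \<Rightarrow> ('a mpoly \<Rightarrow> 'e::field) \<Rightarrow> bool" where
  "is_quotient_map l P \<pi> \<longleftrightarrow>
     (\<forall>p\<in>polys l. \<forall>q\<in>polys l. \<pi> (p + q) = \<pi> p + \<pi> q \<and> \<pi> (p * q) = \<pi> p * \<pi> q) \<and>
     \<pi> 1 = 1 \<and> \<pi> ` polys l = UNIV \<and> (\<forall>p\<in>polys l. \<pi> p = 0 \<longleftrightarrow> p \<in> P)"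

text \<open>F-scalar multiplication on E: c * (g + P) = (c g) + P.\<close>
definition fsmult :: "('a::zero mpoly \<Rightarrow> 'e::field) \<Rightarrow> 'a \<Rightarrow> 'e \<Rightarrow> 'e" where
  "fsmult \<pi> c e = \<pi> (Const c) * e"

definition is_F_basis :: "('a::zero mpoly \<Rightarrow> 'e::field) \<Rightarrow> nat \<Rightarrow> (nat \<Rightarrow> 'e) \<Rightarrow> bool" where
  "is_F_basis \<pi> k b \<longleftrightarrow>
     (\<forall>c. (\<Sum>i<k. fsmult \<pi> (c i) (b i)) = 0 \<longrightarrow> (\<forall>i<k. c i = 0)) \<and>
     (\<forall>e. \<exists>c. e = (\<Sum>i<k. fsmult \<pi> (c i) (b i)))"

end

theory Submission
  imports Defs
begin

lemma lookup_pm_map: "Poly_Mapping.lookup (Poly_Mapping.map f p) k =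
   (if Poly_Mapping.lookup p k = 0 then 0 else f (Poly_Mapping.lookup p k))"
  by transfer (simp add: when_def)

lemma polys_add: "p \<in> polys l \<Longrightarrow> q \<in> polys l \<Longrightarrow> p + q \<in> polys l"
  unfolding polys_def using keys_add[of p q] by blast

lemma polys_mult:
  assumes "p \<in> polys l" "(q::'a::comm_ring_1 mpoly) \<in> polys l" shows "p * q \<in> polys l"
  unfolding polys_def mem_Collect_eq
proof (intro ballI)
  fix mo assume "mo \<in> Poly_Mapping.keys (p * q)"
  then obtain a b where ab: "mo = a + b" "a \<in> Poly_Mapping.keys p" "b \<in> Poly_Mapping.keys q"
    using keys_mult[of p q] by blast
  have "Poly_Mapping.keys mo \<subseteq> Poly_Mapping.keys a \<union> Poly_Mapping.keys b"
    unfolding ab(1) by (rule keys_add)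
  moreover have "Poly_Mapping.keys a \<subseteq> {..<l}" using ab(2) assms(1) by (auto simp: polys_def)
  moreover have "Poly_Mapping.keys b \<subseteq> {..<l}" using ab(3) assms(2) by (auto simp: polys_def)
  ultimately show "Poly_Mapping.keys mo \<subseteq> {..<l}" by blast
qed

lemma polys_one: "(1::'a::comm_ring_1 mpoly) \<in> polys l"
  unfolding polys_def by simp

lemma polys_zero: "(0::'a::comm_ring_1 mpoly) \<in> polys l"
  unfolding polys_def by simp

lemma polys_uminus: "(p::'a::comm_ring_1 mpoly) \<in> polys l \<Longrightarrow> - p \<in> polys l"
  unfolding polys_def by simp

lemma polys_Const: "(Const c :: 'a::comm_ring_1 mpoly) \<in> polys l"
  unfolding polys_def Const_def by simp

lemma polys_sum: "(\<And>x. x \<in> A \<Longrightarrow> f x \<in> polys l) \<Longrightarrow> (\<Sum>x\<in>A. f x :: 'a::comm_ring_1 mpoly) \<in> polys l"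
  by (induction A rule: infinite_finite_induct) (auto simp: polys_zero polys_add)

lemma polys_prod: "(\<And>x. x \<in> A \<Longrightarrow> f x \<in> polys l) \<Longrightarrow> (\<Prod>x\<in>A. f x :: 'a::comm_ring_1 mpoly) \<in> polys l"
  by (induction A rule: infinite_finite_induct) (auto simp: polys_one polys_mult)

lemma polys_power: "(p :: 'a::comm_ring_1 mpoly) \<in> polys l \<Longrightarrow> p ^ m \<in> polys l"
  by (induction m) (auto simp: polys_one polys_mult)

lemma tdeg_le_iff: "tdeg p \<le> h \<longleftrightarrow> (\<forall>mo\<in>Poly_Mapping.keys p. mon_deg mo \<le> h)"
  unfolding tdeg_def by simp

lemma polys_le_add: "p \<in> polys_le l h \<Longrightarrow> q \<in> polys_le l h \<Longrightarrow> p + q \<in> polys_le l h"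
  unfolding polys_le_def tdeg_le_iff using polys_add[of p l q] keys_add[of p q] by blast

lemma polys_le_zero: "(0::'a::comm_ring_1 mpoly) \<in> polys_le l h"
  unfolding polys_le_def tdeg_le_iff by (simp add: polys_zero)

lemma polys_le_sum: "(\<And>x. x \<in> A \<Longrightarrow> f x \<in> polys_le l h) \<Longrightarrow> (\<Sum>x\<in>A. f x :: 'a::comm_ring_1 mpoly) \<in> polys_le l h"
  by (induction A rule: infinite_finite_induct) (auto simp: polys_le_zero polys_le_add)

lemma keys_Const_mult: "Poly_Mapping.keys (Const c * (p::'a::comm_ring_1 mpoly)) \<subseteq> Poly_Mapping.keys p"
proof
  fix mo assume "mo \<in> Poly_Mapping.keys (Const c * p)"
  then obtain a b where ab: "mo = a + b" "a \<in> Poly_Mapping.keys (Const c)" "b \<in> Poly_Mapping.keys p"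
    using keys_mult[of "Const c" p] by blast
  then have "a = 0" by (simp add: Const_def split: if_splits)
  with ab show "mo \<in> Poly_Mapping.keys p" by simp
qed

lemma polys_le_Const_mult: "(p::'a::comm_ring_1 mpoly) \<in> polys_le l h \<Longrightarrow> Const c * p \<in> polys_le l h"
  unfolding polys_le_def tdeg_le_iff polys_def using keys_Const_mult[of c p] by blast

locale hom_on =
  fixes l :: nat and \<pi> :: "'a::comm_ring_1 mpoly \<Rightarrow> 'e::field"
  assumes hom: "\<forall>p\<in>polys l. \<forall>q\<in>polys l. \<pi> (p + q) = \<pi> p + \<pi> q \<and> \<pi> (p * q) = \<pi> p * \<pi> q"
    and one: "\<pi> 1 = 1"
begin

lemma zero: "\<pi> 0 = 0"
proof -
  have "\<pi> (0 + 0) = \<pi> 0 + \<pi> 0" using hom polys_zero by blast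
  then show ?thesis by (metis add.right_neutral add_left_cancel)
qed

lemma add: "p \<in> polys l \<Longrightarrow> q \<in> polys l \<Longrightarrow> \<pi> (p + q) = \<pi> p + \<pi> q"
  using hom by blast

lemma mult: "p \<in> polys l \<Longrightarrow> q \<in> polys l \<Longrightarrow> \<pi> (p * q) = \<pi> p * \<pi> q"
  using hom by blast

lemma neg: "p \<in> polys l \<Longrightarrow> \<pi> (- p) = - \<pi> p"
  using add[of p "-p"] polys_uminus[of p l] zero by (simp add: eq_neg_iff_add_eq_0 add.commute)

lemma diff: "p \<in> polys l \<Longrightarrow> q \<in> polys l \<Longrightarrow> \<pi> (p - q) = \<pi> p - \<pi> q"
  using add[of p "-q"] polys_uminus[of q l] neg[of q] by simp

lemma sum: "(\<And>x. x \<in> A \<Longrightarrow> f x \<in> polys l) \<Longrightarrow> \<pi> (\<Sum>x\<in>A. f x) = (\<Sum>x\<in>A. \<pi> (f x))"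
  by (induction A rule: infinite_finite_induct) (auto simp: zero add polys_sum)

lemma prod: "(\<And>x. x \<in> A \<Longrightarrow> f x \<in> polys l) \<Longrightarrow> \<pi> (\<Prod>x\<in>A. f x) = (\<Prod>x\<in>A. \<pi> (f x))"
  by (induction A rule: infinite_finite_induct) (auto simp: one mult polys_prod)

lemma power: "p \<in> polys l \<Longrightarrow> \<pi> (p ^ m) = \<pi> p ^ m"
  by (induction m) (auto simp: one mult polys_power)

lemma eval: "(\<And>i. X i \<in> polys l) \<Longrightarrow>
   \<pi> (eval_mpoly Const X f) = eval_mpoly (\<lambda>c. \<pi> (Const c)) (\<lambda>i. \<pi> (X i)) f"
  unfolding eval_mpoly_def
  by (simp add: sum prod mult power polys_mult polys_Const polys_prod polys_power)

end


theorem claim4p1: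
  fixes l h n d k :: nat
    and P :: "'a::{finite,field} mpoly set"
    and \<pi> :: "'a mpoly \<Rightarrow> 'e::field"
    and g g' :: "nat \<Rightarrow> 'a mpoly"
    and \<phi> :: "'e \<Rightarrow> 'a mpoly"
    and S :: "'s set"
    and Hhat :: "'s \<Rightarrow> nat \<Rightarrow> 'e"
    and \<delta> :: real
  assumes pos: "l > 0" "h > 0" "n > 0" "d > 0"
    and maxP: "is_maximal_ideal l P"
    and quot: "is_quotient_map l P \<pi>"
    and lowdeg: "\<forall>e. \<exists>q\<in>polys_le l h. \<pi> q = e"
    and g_in: "\<forall>i<k. g i \<in> polys l"
    and basis: "is_F_basis \<pi> k (\<lambda>i. \<pi> (g i))"
    and g'_deg: "\<forall>i<k. g' i \<in> polys_le l h"
    and g'_coset: "\<forall>i<k. g' i - g i \<in> P"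
    and \<phi>_add: "\<forall>x y. \<phi> (x + y) = \<phi> x + \<phi> y"
    and \<phi>_smult: "\<forall>c x. \<phi> (fsmult \<pi> c x) = Const c * \<phi> x"
    and \<phi>_basis: "\<forall>i<k. \<phi> (\<pi> (g i)) = g' i"
    and Hhat: "hsg n d S Hhat \<delta>"
  shows "phsg l h n d S (\<lambda>y i. \<phi> (Hhat y i)) \<delta>"
proof -
  interpret H: hom_on l \<pi>
    using quot unfolding is_quotient_map_def by unfold_locales blast+
  have ker: "\<And>p. p \<in> polys l \<Longrightarrow> \<pi> p = 0 \<longleftrightarrow> p \<in> P"
    using quot unfolding is_quotient_map_def by blast
  have g'_pl: "g' i \<in> polys l" if "i < k" for i
    using g'_deg that unfolding polys_le_def by blast
  have \<pi>g': "\<pi> (g' i) = \<pi> (g i)" if "i < k" for i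
  proof -
    have "g' i - g i \<in> polys l"
      using g'_pl[OF that] g_in that polys_add[of "g' i" l "- g i"] polys_uminus[of "g i" l] by auto
    then have "\<pi> (g' i - g i) = 0" using ker g'_coset that by blast
    then show ?thesis using H.diff[of "g' i" "g i"] g'_pl[OF that] g_in that by simp
  qed
  have \<phi>0: "\<phi> 0 = 0"
    using \<phi>_add[rule_format, of 0 0] by (metis add.right_neutral add_left_cancel)
  have \<phi>sum: "\<phi> (\<Sum>i\<in>A. f i) = (\<Sum>i\<in>A. \<phi> (f i))" for A :: "nat set" and f
    by (induction A rule: infinite_finite_induct) (auto simp: \<phi>0 \<phi>_add)
  have \<phi>e: "\<phi> e \<in> polys_le l h \<and> \<pi> (\<phi> e) = e" for e
  proof -
    obtain c where c: "e = (\<Sum>i<k. fsmult \<pi> (c i) (\<pi> (g i)))"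
      using basis unfolding is_F_basis_def by blast
    have \<phi>c: "\<phi> e = (\<Sum>i<k. Const (c i) * g' i)"
      unfolding c \<phi>sum using \<phi>_smult \<phi>_basis by simp
    have "\<phi> e \<in> polys_le l h"
      unfolding \<phi>c by (rule polys_le_sum) (simp add: polys_le_Const_mult g'_deg)
    moreover have "\<pi> (\<phi> e) = e"
      unfolding \<phi>c
      by (subst H.sum) (simp_all add: c H.mult polys_mult polys_Const g'_pl \<pi>g' fsmult_def)
    ultimately show ?thesis by blast
  qed
  have Cnz: "\<pi> (Const c) \<noteq> 0" if "c \<noteq> 0" for c
  proof
    assume "\<pi> (Const c) = 0"
    have "Const c * Const (inverse c) = (1 :: 'a mpoly)"
      unfolding Const_def mult_single using that by simp
    then have "\<pi> (Const c) * \<pi> (Const (inverse c)) = 1"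
      using H.mult[of "Const c" "Const (inverse c)"] H.one polys_Const by metis
    with \<open>\<pi> (Const c) = 0\<close> show False by simp
  qed
  have fin: "finite S" "S \<noteq> {}" using Hhat unfolding hsg_def by auto
  have main: "real (card {y\<in>S. eval_mpoly Const (\<lambda>i. \<phi> (Hhat y i)) f = 0}) / real (card S) \<le> \<delta>"
    if f: "f \<noteq> 0" "f \<in> polys n" "tdeg f \<le> d" for f :: "'a mpoly"
  proof -
    define fE where "fE = Poly_Mapping.map (\<lambda>c. \<pi> (Const c)) f"
    have lk: "Poly_Mapping.lookup fE mo = \<pi> (Const (Poly_Mapping.lookup f mo))" for mo
      unfolding fE_def lookup_pm_map using H.zero by (simp add: Const_def)
    have keq: "Poly_Mapping.keys fE = Poly_Mapping.keys f"
      using Cnz lk by (auto simp: in_keys_iff H.zero Const_def)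
    have fE: "fE \<noteq> 0" "fE \<in> polys n" "tdeg fE \<le> d"
      using f keq keys_eq_empty[of f] keys_eq_empty[of fE] unfolding polys_def tdeg_def by auto
    have evE: "eval_mpoly id X fE = eval_mpoly (\<lambda>c. \<pi> (Const c)) X f" for X
      unfolding eval_mpoly_def keq lk by simp
    let ?A = "{y\<in>S. eval_mpoly Const (\<lambda>i. \<phi> (Hhat y i)) f = 0}"
    let ?B = "{t\<in>S. eval_mpoly id (Hhat t) fE \<noteq> 0}"
    have hit: "real (card ?B) / real (card S) \<ge> 1 - \<delta>"
      using Hhat fE unfolding hsg_def by blast
    have sub: "?A \<subseteq> S - ?B"
    proof
      fix y assume y: "y \<in> ?A"
      have "\<pi> (eval_mpoly Const (\<lambda>i. \<phi> (Hhat y i)) f) = eval_mpoly id (Hhat y) fE"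
        using H.eval[of "\<lambda>i. \<phi> (Hhat y i)" f] \<phi>e unfolding polys_le_def evE by simp
      then show "y \<in> S - ?B" using y H.zero by auto
    qed
    have "card ?A \<le> card (S - ?B)" using sub fin by (intro card_mono) auto
    also have "card (S - ?B) = card S - card ?B" using fin by (intro card_Diff_subset) auto
    finally have "real (card ?A) \<le> real (card S) - real (card ?B)"
      using card_mono[OF fin(1), of ?B] by auto
    then have "real (card ?A) / real (card S) \<le> 1 - real (card ?B) / real (card S)"
      using fin by (simp add: field_simps card_gt_0_iff)
    then show ?thesis using hit by linarith
  qed
  show ?thesis
    unfolding phsg_def using fin \<phi>e main by blast
qed

end
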